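(* Let $N,n,m,p,l$ be positive integers, $A\in\mathbb{R}^{n\times n}$, $B\in\mathbb{R}^{n\times p}$, $C\in\mathbb{R}^{m\times n}$, $H\in\mathbb{R}^{n\times m}$, $W=[w_{ij}]\in\mathbb{R}^{N\times N}$ with $w_{ii}=0$ for all $i$, $\Delta=\mathrm{diag}(\delta_1,\dots,\delta_N)$ with $\delta_i\in\{0,1\}$, and $h>0$. Put $\mathcal{B}(h)=\int_0^h e^{A\tau}d\tau\,B$, $\mathcal{H}(h)=\int_0^h e^{A\tau}d\tau\,HC$, $\Phi_s=I_N\otimes e^{Ah}+W\otimes\mathcal{H}(h)$, $\Psi_s=\Delta\otimes\mathcal{B}(h)$, $\tilde\Phi_s=\Phi_s^l$ and $\tilde\Psi_s=(\Phi_s^{l-1}+\Phi_s^{l-2}+\dots+\Phi_s+I)\Psi_s$. Suppose: (1) for every eigenvalue $\theta$ of $\Phi_s$, $\sum_{c=0}^{l-1}\theta^c\neq0$; (2) for every eigenvalue $\theta$ of $\Phi_s$ and every nonzero row vector $\eta\in\mathbb{C}^{1\times Nn}$ with $\eta\tilde\Phi_s=\theta^l\eta$, one has $\eta(\Delta\otimes\mathcal{B}(h))\neq0$. Then the discrete-time system $X(k+1)=\tilde\Phi_sX(k)+\tilde\Psi_sU(k)$ is controllable.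
   Context: This is the networked transmission multi-rate sampled-data system: transmission sampling period $h$, control sampling period $lh$, written as a discrete-time system with period $lh$. The discrete-time system is called controllable if every initial state can be steered to the origin in finitely many steps. $\otimes$ is the Kronecker product. *)

theory Defs
  imports "HOL-Analysis.Analysis"
begin

definition matpow :: "'a::comm_ring_1^'n^'n \<Rightarrow> nat \<Rightarrow> 'a^'n^'n" where
  "matpow M k = (((**) M) ^^ k) (mat 1)"

definition mexp :: "real^'n^'n \<Rightarrow> real^'n^'n" where
  "mexp M = (\<Sum>k. (1 / fact k) *\<^sub>R matpow M k)"

definition kron :: "'a::times^'j^'i \<Rightarrow> 'a^'l^'k \<Rightarrow> 'a^('j \<times> 'l)^('i \<times> 'k)" where
  "kron P Q = (\<chi> r c. P $ fst r $ fst c * Q $ snd r $ snd c)"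

definition cmat :: "real^'j^'i \<Rightarrow> complex^'j^'i" where
  "cmat M = (\<chi> i j. complex_of_real (M $ i $ j))"

definition is_eigenvalue :: "real^'n^'n \<Rightarrow> complex \<Rightarrow> bool" where
  "is_eigenvalue M \<theta> \<longleftrightarrow> (\<exists>v::complex^'n. v \<noteq> 0 \<and> cmat M *v v = \<theta> *s v)"

fun traj :: "real^'n^'n \<Rightarrow> real^'p^'n \<Rightarrow> real^'n \<Rightarrow> (nat \<Rightarrow> real^'p) \<Rightarrow> nat \<Rightarrow> real^'n" where
  "traj F G x0 U 0 = x0"
| "traj F G x0 U (Suc k) = F *v traj F G x0 U k + G *v U k"

definition controllable :: "real^'n^'n \<Rightarrow> real^'p^'n \<Rightarrow> bool" where
  "controllable F G \<longleftrightarrow> (\<forall>x0. \<exists>K U. traj F G x0 U K = 0)"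

end

theory Submission
  imports Defs "HOL-Computational_Algebra.Fundamental_Theorem_Algebra" "HOL-Number_Theory.Cong"
begin


lemma matpow_0[simp]: "matpow M 0 = mat 1" by (simp add: matpow_def)
lemma matpow_Suc: "matpow M (Suc k) = M ** matpow M k" by (simp add: matpow_def)

definition pe :: "nat \<Rightarrow> complex poly \<Rightarrow> complex^'k^'k \<Rightarrow> complex^'k \<Rightarrow> complex^'k" where
  "pe n p M x = (\<Sum>i\<le>n. coeff p i *s (x v* matpow M i))"

definition peval :: "complex poly \<Rightarrow> complex^'k^'k \<Rightarrow> complex^'k \<Rightarrow> complex^'k" where
  "peval p M x = pe (degree p) p M x"

lemma pe_peval: assumes "degree p \<le> n" shows "pe n p M x = peval p M x"
  unfolding peval_def pe_def
  by (rule sum.mono_neutral_right) (use assms in \<open>auto simp: coeff_eq_0 not_le\<close>)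

lemma pe_add: "pe n (p + q) M x = pe n p M x + pe n q M x"
  unfolding pe_def by (simp add: sum.distrib vector_sadd_rdistrib)

lemma pe_smult: "pe n (smult a p) M x = a *s pe n p M x"
  unfolding pe_def by (simp add: vec.scale_sum_right)

lemma pe_pCons0: "pe (Suc n) (pCons 0 q) M x = pe n q M (x v* M)"
  unfolding pe_def
  by (simp add: sum.atMost_Suc_shift matpow_Suc vector_matrix_mul_assoc del: sum.atMost_Suc)

lemma pe_lin: "pe n q M (x - z *s y) = pe n q M x - z *s pe n q M y"
proof -
  have "coeff q i *s ((x - z *s y) v* matpow M i) =
        coeff q i *s (x v* matpow M i) - z *s (coeff q i *s (y v* matpow M i))" for i
    by (simp add: vector_matrix_mult_diff_distrib scalar_vector_matrix_assoc
        vector_ssub_ldistrib vector_smult_assoc mult.commute)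
  thus ?thesis unfolding pe_def
    by (simp add: sum_subtractf vec.scale_sum_right)
qed

lemma peval_lin: "peval ([:-z, 1:] * q) M x = peval q M (x v* M - z *s x)"
proof -
  have d: "degree ([:-z, 1:] * q) \<le> Suc (degree q)"
    using degree_mult_le[of "[:-z, 1:]" q] by simp
  have e: "[:-z, 1:] * q = smult (-z) q + pCons 0 q" by simp
  have "peval ([:-z, 1:] * q) M x = pe (Suc (degree q)) ([:-z, 1:] * q) M x"
    by (rule pe_peval[OF d, symmetric])
  also have "\<dots> = (-z) *s pe (Suc (degree q)) q M x + pe (degree q) q M (x v* M)"
    by (simp only: e pe_add pe_smult pe_pCons0)
  also have "\<dots> = (-z) *s peval q M x + peval q M (x v* M)"
    by (simp add: pe_peval)
  also have "\<dots> = peval q M (x v* M - z *s x)"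
    unfolding peval_def pe_lin by simp
  finally show ?thesis .
qed

lemma peval_1: "peval 1 M x = x"
  unfolding peval_def pe_def by simp

lemma peval_smult: "peval (smult a p) M x = a *s peval p M x"
proof (cases "a = 0")
  case True thus ?thesis by (simp add: peval_def pe_def)
next
  case False thus ?thesis by (simp add: peval_def pe_smult)
qed

lemma eig_prod:
  fixes M :: "complex^'k^'k" and d :: nat
  assumes V: "vec.subspace V" and inv: "\<forall>x\<in>V. x v* M \<in> V"
    and "x \<in> V" "x \<noteq> 0" "peval (\<Prod>i<d. [:-r i, 1:]) M x = 0"
  shows "\<exists>\<xi> \<theta>. \<xi> \<in> V \<and> \<xi> \<noteq> 0 \<and> \<xi> v* M = \<theta> *s \<xi>"
  using assms(3-5)
proof (induct d arbitrary: x)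
  case 0 thus ?case by (simp add: peval_1)
next
  case (Suc d)
  let ?y = "x v* M - r d *s x"
  have y: "?y \<in> V" using Suc.prems(1) inv V by (simp add: vec.subspace_diff vec.subspace_scale)
  have py: "peval (\<Prod>i<d. [:-r i, 1:]) M ?y = 0"
  proof -
    have "(\<Prod>i<Suc d. [:-r i, 1:]) = [:-r d, 1:] * (\<Prod>i<d. [:-r i, 1:])"
      by (simp only: prod.lessThan_Suc mult.commute)
    thus ?thesis using Suc.prems(3) peval_lin by metis
  qed
  show ?case
  proof (cases "?y = 0")
    case True
    hence "x v* M = r d *s x" by simp
    thus ?thesis using Suc.prems by blast
  next
    case False thus ?thesis using Suc.hyps y py by blast
  qed
qed

lemma exists_annih:
  fixes M :: "complex^'k^'k" and x0 :: "complex^'k"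
  shows "\<exists>p. p \<noteq> 0 \<and> peval p M x0 = 0"
proof -
  define K where "K = CARD('k)"
  define f where "f i = x0 v* matpow M i" for i
  show ?thesis
  proof (cases "inj_on f {..K}")
    case False
    then obtain i j where ij: "i \<le> K" "j \<le> K" "i \<noteq> j" "f i = f j"
      unfolding inj_on_def by auto
    define a where "a = max i j"
    define b where "b = min i j"
    have ab: "b < a" "f a = f b" using ij unfolding a_def b_def by (auto simp: max_def min_def)
    define p :: "complex poly" where "p = monom 1 a - monom 1 b"
    have cp: "coeff p t = (if t = a then 1 else 0) - (if t = b then 1 else 0)" for t
      unfolding p_def by (simp add: coeff_monom)
    have "coeff p a = 1" using ab cp by simp
    hence "p \<noteq> 0" by auto
    have "degree p \<le> a"
      unfolding p_def using ab by (intro degree_diff_le) (auto simp: degree_monom_eq)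
    hence "peval p M x0 = pe a p M x0" using pe_peval by metis
    also have "\<dots> = (\<Sum>t\<le>a. (if t = a then f t else 0) - (if t = b then f t else 0))"
      unfolding pe_def f_def cp by (intro sum.cong) auto
    also have "\<dots> = f a - f b" using ab by (simp add: sum_subtractf)
    also have "\<dots> = 0" using ab by simp
    finally show ?thesis using \<open>p \<noteq> 0\<close> by blast
  next
    case True
    define S where "S = f ` {..K}"
    have fin: "finite S" unfolding S_def by simp
    have cardS: "card S = Suc K" unfolding S_def using True by (simp add: card_image)
    have "vec.dim S \<le> K" unfolding K_def by (rule dim_subset_UNIV_cart_gen)
    hence "vec.dependent S" using cardS by (intro vec.dependent_biggerset_general) auto
    then obtain u where u: "\<exists>v\<in>S. u v \<noteq> 0" "(\<Sum>v\<in>S. u v *s v) = 0"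
      using vec.dependent_finite[OF fin] by blast
    define c where "c i = u (f i)" for i
    define p :: "complex poly" where "p = (\<Sum>i\<le>K. monom (c i) i)"
    have cp: "coeff p t = (if t \<le> K then c t else 0)" for t
      unfolding p_def by (simp add: coeff_sum coeff_monom)
    obtain i where i: "i \<le> K" "c i \<noteq> 0" using u(1) unfolding S_def c_def by auto
    have "p \<noteq> 0" using i cp by (metis coeff_0)
    have "degree p \<le> K" by (rule degree_le) (simp add: cp)
    hence "peval p M x0 = pe K p M x0" using pe_peval by metis
    also have "\<dots> = (\<Sum>i\<le>K. u (f i) *s f i)"
      unfolding pe_def f_def cp c_def by (intro sum.cong) auto
    also have "\<dots> = (\<Sum>v\<in>S. u v *s v)"
      unfolding S_def using sum.reindex[OF True, of "\<lambda>v. u v *s v"] by simp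
    also have "\<dots> = 0" using u(2) .
    finally show ?thesis using \<open>p \<noteq> 0\<close> by blast
  qed
qed

lemma eig_subspace:
  fixes M :: "complex^'k^'k"
  assumes V: "vec.subspace V" and inv: "\<forall>x\<in>V. x v* M \<in> V"
    and x: "x \<in> V" "x \<noteq> 0"
  shows "\<exists>\<xi> \<theta>. \<xi> \<in> V \<and> \<xi> \<noteq> 0 \<and> \<xi> v* M = \<theta> *s \<xi>"
proof -
  obtain p where p: "p \<noteq> 0" "peval p M x = 0" using exists_annih by blast
  obtain r where r: "smult (lead_coeff p) (\<Prod>i<degree p. [:-r i, 1:]) = p"
    using complex_poly_decompose' by blast
  have "lead_coeff p *s peval (\<Prod>i<degree p. [:-r i, 1:]) M x = 0"
    using p(2) r peval_smult by metis
  hence "peval (\<Prod>i<degree p. [:-r i, 1:]) M x = 0" using p(1) by simp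
  thus ?thesis using eig_prod[OF V inv x] by blast
qed



definition cvec :: "real^'k \<Rightarrow> complex^'k" where
  "cvec x = (\<chi> i. complex_of_real (x $ i))"

lemma cmat_mult: "cmat (A ** B) = cmat A ** cmat B"
  by (simp add: cmat_def matrix_matrix_mult_def vec_eq_iff)

lemma cmat_add: "cmat (A + B) = cmat A + cmat B"
  by (simp add: cmat_def vec_eq_iff)

lemma cmat_mat1: "cmat (mat 1) = mat 1"
  by (simp add: cmat_def mat_def vec_eq_iff)

lemma cmat_zero[simp]: "cmat 0 = 0"
  by (simp add: cmat_def vec_eq_iff)

lemma cmat_sum: "cmat (sum f S) = (\<Sum>i\<in>S. cmat (f i))"
  by (induct S rule: infinite_finite_induct) (simp_all add: cmat_add)

lemma cmat_matpow: "cmat (matpow M k) = matpow (cmat M) k"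
  by (induct k) (simp_all add: cmat_mat1 matpow_Suc cmat_mult)

lemma cvec_vmult: "cvec x v* cmat A = cvec (x v* A)"
  by (simp add: cvec_def cmat_def vector_matrix_mult_def vec_eq_iff)

lemma cvec_eq0: "cvec x = 0 \<longleftrightarrow> x = 0"
  by (simp add: cvec_def vec_eq_iff)

lemma traj_formula:
  "traj F G x0 U K = matpow F K *v x0 + (\<Sum>j<K. matpow F (K - Suc j) *v (G *v U j))"
proof (induct K)
  case 0 thus ?case by simp
next
  case (Suc K)
  have "F *v (\<Sum>j<K. matpow F (K - Suc j) *v (G *v U j)) = (\<Sum>j<K. matpow F (Suc K - Suc j) *v (G *v U j))"
    by (auto simp: vec.sum matrix_vector_mul_assoc intro!: sum.cong)
       (metis Suc_diff_Suc matpow_Suc matrix_mul_assoc)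
  thus ?case using Suc
    by (simp add: matrix_vector_right_distrib matrix_vector_mul_assoc matpow_Suc)
qed

lemma pbh:
  fixes F :: "real^'k^'k" and G :: "real^'r^'k"
  assumes H: "\<forall>(\<xi>::complex^'k) \<mu>. \<xi> \<noteq> 0 \<and> \<xi> v* cmat F = \<mu> *s \<xi> \<longrightarrow> \<xi> v* cmat G \<noteq> 0"
  shows "controllable F G"
proof -
  define S where "S = {matpow F j *v (G *v u) | j u. True}"
  have spanS: "span S = UNIV"
  proof (rule ccontr)
    assume ns: "span S \<noteq> UNIV"
    have "dim S \<le> DIM(real^'k)" by (metis dim_subset subset_UNIV eucl.dim_UNIV)
    hence "dim S < DIM(real^'k)" using ns eucl.dim_eq_full[of S] by linarith
    then obtain w :: "real^'k" where w: "w \<noteq> 0" "\<And>y. y \<in> span S \<Longrightarrow> orthogonal w y"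
      by (metis orthogonal_to_subspace_exists)
    have wz: "w v* (matpow F j ** G) = 0" for j
    proof -
      let ?X = "matpow F j ** G"
      have "(w v* ?X) \<bullet> (w v* ?X) = w \<bullet> (?X *v (w v* ?X))" by (rule dot_lmul_matrix)
      also have "\<dots> = 0"
      proof -
        have "?X *v (w v* ?X) \<in> span S"
          by (rule span_base) (auto simp: S_def matrix_vector_mul_assoc[symmetric])
        thus ?thesis using w(2) orthogonal_def by blast
      qed
      finally show ?thesis by simp
    qed
    define V where "V = {\<eta> :: complex^'k. \<forall>j. \<eta> v* cmat (matpow F j ** G) = 0}"
    have sV: "vec.subspace V"
      unfolding vec.subspace_def V_def
      by (simp add: vector_matrix_left_distrib scalar_vector_matrix_assoc)
    have inv: "\<forall>x\<in>V. x v* cmat F \<in> V"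
    proof
      fix x assume "x \<in> V"
      have "(x v* cmat F) v* cmat (matpow F j ** G) = x v* cmat (matpow F (Suc j) ** G)" for j
        by (simp add: vector_matrix_mul_assoc cmat_mult[symmetric] matpow_Suc matrix_mul_assoc)
      thus "x v* cmat F \<in> V" using \<open>x \<in> V\<close> unfolding V_def by simp
    qed
    have "cvec w \<in> V" unfolding V_def by (simp add: cvec_vmult wz cvec_eq0)
    moreover have "cvec w \<noteq> 0" using w(1) cvec_eq0 by blast
    ultimately obtain \<xi> \<mu> where xi: "\<xi> \<in> V" "\<xi> \<noteq> 0" "\<xi> v* cmat F = \<mu> *s \<xi>"
      using eig_subspace[OF sV inv] by blast
    have "\<xi> v* cmat (matpow F 0 ** G) = 0" using xi(1) unfolding V_def by blast
    hence "\<xi> v* cmat G = 0" by simp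
    thus False using H xi by blast
  qed
  show ?thesis unfolding controllable_def
  proof
    fix x0 :: "real^'k"
    obtain B where B: "B \<subseteq> S" "independent B" "S \<subseteq> span B" by (rule maximal_independent_subset)
    have finB: "finite B" using B(2) by (rule independent_imp_finite)
    have "\<forall>b\<in>B. \<exists>j u. b = matpow F j *v (G *v u)" using B(1) S_def by auto
    then obtain jj uu where ju: "\<And>b. b \<in> B \<Longrightarrow> b = matpow F (jj b) *v (G *v uu b)" by metis
    define K where "K = Suc (Max (jj ` B))"
    define T where "T = {y. \<exists>u. y = (\<Sum>j<K. matpow F j *v (G *v u j))}"
    have subT: "subspace T"
      unfolding subspace_def T_def
    proof (intro conjI ballI allI)
      show "(0::real^'k) \<in> {y. \<exists>u. y = (\<Sum>j<K. matpow F j *v (G *v u j))}"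
        by (auto intro!: exI[of _ "\<lambda>_. 0"])
    next
      fix x y assume "x \<in> {y. \<exists>u. y = (\<Sum>j<K. matpow F j *v (G *v u j))}"
        "y \<in> {y. \<exists>u. y = (\<Sum>j<K. matpow F j *v (G *v u j))}"
      then obtain u u' where "x = (\<Sum>j<K. matpow F j *v (G *v u j))" "y = (\<Sum>j<K. matpow F j *v (G *v u' j))"
        by auto
      thus "x + y \<in> {y. \<exists>u. y = (\<Sum>j<K. matpow F j *v (G *v u j))}"
        by (auto intro!: exI[of _ "\<lambda>j. u j + u' j"] simp: matrix_vector_right_distrib sum.distrib)
    next
      fix c :: real and x assume "x \<in> {y. \<exists>u. y = (\<Sum>j<K. matpow F j *v (G *v u j))}"
      then obtain u where "x = (\<Sum>j<K. matpow F j *v (G *v u j))" by auto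
      thus "c *\<^sub>R x \<in> {y. \<exists>u. y = (\<Sum>j<K. matpow F j *v (G *v u j))}"
        by (auto intro!: exI[of _ "\<lambda>j. c *\<^sub>R u j"] simp: matrix_vector_mult_scaleR scaleR_sum_right)
    qed
    have BT: "B \<subseteq> T"
    proof
      fix b assume b: "b \<in> B"
      have jK: "jj b < K" unfolding K_def using finB b by (simp add: le_imp_less_Suc)
      have "(\<Sum>j<K. matpow F j *v (G *v (if j = jj b then uu b else 0))) =
            (\<Sum>j<K. if j = jj b then matpow F j *v (G *v uu b) else 0)"
        by (intro sum.cong) auto
      also have "\<dots> = b" using jK ju[OF b] by simp
      finally have "b = (\<Sum>j<K. matpow F j *v (G *v (if j = jj b then uu b else 0)))" by simp
      thus "b \<in> T" unfolding T_def mem_Collect_eq by (rule exI[where x="\<lambda>j. if j = jj b then uu b else 0"])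
    qed
    have "UNIV \<subseteq> T"
    proof -
      have "span S \<subseteq> span B" using B(3) by (metis span_mono span_span)
      also have "\<dots> \<subseteq> T" using BT subT by (rule span_minimal)
      finally show ?thesis using spanS by simp
    qed
    then obtain u where u: "- (matpow F K *v x0) = (\<Sum>j<K. matpow F j *v (G *v u j))"
      unfolding T_def by blast
    have "traj F G x0 (\<lambda>j. u (K - Suc j)) K = matpow F K *v x0 + (\<Sum>j<K. matpow F j *v (G *v u j))"
      unfolding traj_formula
      using sum.nat_diff_reindex[of "\<lambda>j. matpow F j *v (G *v u j)" K] by simp
    also have "\<dots> = 0" using u[symmetric] by simp
    finally show "\<exists>K U. traj F G x0 U K = 0" by blast
  qed
qed



lemma matpow_add: "matpow M (a + b) = matpow M a ** matpow M b"
  by (induct a) (simp_all add: matpow_Suc matrix_mul_assoc)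

lemma matpow_commute: "matpow M a ** matpow M b = matpow M b ** matpow M a"
  by (metis matpow_add add.commute)

lemma matpow_Suc': "matpow M (Suc k) = matpow M k ** M"
  using matpow_add[of M k 1] by (simp add: matpow_Suc)

lemma mmult_radd: "(B + C) ** (A::'a::comm_ring_1^'k^'k) = B ** A + C ** A"
  by (simp add: matrix_matrix_mult_def vec_eq_iff sum.distrib[symmetric] distrib_right)

lemma mmult_0l: "(0::'a::comm_ring_1^'k^'k) ** A = 0"
  by (simp add: matrix_matrix_mult_def vec_eq_iff)

lemma mmult_0r: "A ** (0::'a::comm_ring_1^'k^'k) = 0"
  by (simp add: matrix_matrix_mult_def vec_eq_iff)

lemma mmult_sum_left: "A ** sum f S = (\<Sum>i\<in>S. A ** f i)" for A :: "'a::comm_ring_1^'k^'k"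
  by (induct S rule: infinite_finite_induct) (simp_all add: mmult_0r matrix_add_ldistrib)

lemma mmult_sum_right: "sum f S ** A = (\<Sum>i\<in>S. f i ** A)" for A :: "'a::comm_ring_1^'k^'k"
  by (induct S rule: infinite_finite_induct) (simp_all add: mmult_0l mmult_radd)

lemma vmult_sum: "x v* sum f S = (\<Sum>i\<in>S. x v* f i)"
  by (induct S rule: infinite_finite_induct) (simp_all add: vector_matrix_mult_add_rdistrib)

lemma vmult_mat: "x v* mat (c::'a::comm_ring_1) = c *s x"
  by (simp add: vector_matrix_mult_def mat_def vec_eq_iff if_distrib if_distribR sum.delta' cong: if_cong)

lemma mat_vmult: "mat (c::'a::comm_ring_1) *v x = c *s x"
  by (simp add: matrix_vector_mult_def mat_def vec_eq_iff if_distrib if_distribR sum.delta' cong: if_cong)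

lemma left_to_right:
  fixes P :: "complex^'k^'k"
  assumes "\<xi> \<noteq> 0" "\<xi> v* P = \<theta> *s \<xi>"
  shows "\<exists>v. v \<noteq> 0 \<and> P *v v = \<theta> *s v"
proof (rule ccontr)
  assume "\<not> ?thesis"
  hence "\<forall>v. (P - mat \<theta>) *v v = 0 \<longrightarrow> v = 0"
    by (auto simp: matrix_vector_mult_diff_rdistrib mat_vmult)
  then obtain B where "B ** (P - mat \<theta>) = mat 1" using matrix_left_invertible_ker by blast
  hence B: "(P - mat \<theta>) ** B = mat 1" using matrix_left_right_inverse by blast
  have "\<xi> v* (P - mat \<theta>) = 0" using assms(2) by (simp add: vector_matrix_mult_diff_distrib vmult_mat vector_matrix_mult_diff_rdistrib)
  hence "\<xi> v* ((P - mat \<theta>) ** B) = 0" by (simp add: vector_matrix_mul_assoc[symmetric])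
  thus False using B assms(1) by simp
qed

lemma pow_eig: "\<xi> v* P = \<theta> *s \<xi> \<Longrightarrow> \<xi> v* matpow P c = (\<theta>::complex) ^ c *s \<xi>"
  by (induct c) (simp_all add: matpow_Suc' vector_matrix_mul_assoc[symmetric] scalar_vector_matrix_assoc mult.commute)

lemma main_generic:
  fixes Phi :: "real^'k^'k" and Psi :: "real^'r^'k" and l :: nat
  assumes c1: "\<forall>\<theta>. is_eigenvalue Phi \<theta> \<longrightarrow> (\<Sum>c<l. \<theta> ^ c) \<noteq> 0"
    and c2: "\<forall>\<theta> (\<eta>::complex^'k). is_eigenvalue Phi \<theta> \<and> \<eta> \<noteq> 0
                  \<and> \<eta> v* cmat (matpow Phi l) = \<theta> ^ l *s \<eta> \<longrightarrow> \<eta> v* cmat Psi \<noteq> 0"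
  shows "controllable (matpow Phi l) ((\<Sum>c<l. matpow Phi c) ** Psi)"
proof (rule pbh, intro allI impI notI)
  fix \<xi> :: "complex^'k" and \<mu>
  define P where "P = cmat Phi"
  define Fc where "Fc = matpow P l"
  define Sc where "Sc = (\<Sum>c<l. matpow P c)"
  define Pc where "Pc = cmat Psi"
  have eF: "cmat (matpow Phi l) = Fc" unfolding Fc_def P_def by (rule cmat_matpow)
  have eG: "cmat ((\<Sum>c<l. matpow Phi c) ** Psi) = Sc ** Pc"
    unfolding Sc_def Pc_def P_def by (simp add: cmat_mult cmat_sum cmat_matpow)
  assume "\<xi> \<noteq> 0 \<and> \<xi> v* cmat (matpow Phi l) = \<mu> *s \<xi>"
  hence xi: "\<xi> \<noteq> 0" "\<xi> v* Fc = \<mu> *s \<xi>" using eF by auto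
  assume "\<xi> v* cmat ((\<Sum>c<l. matpow Phi c) ** Psi) = 0"
  hence xi0: "\<xi> v* (Sc ** Pc) = 0" using eG by simp
  have P1: "P = matpow P 1" by (simp add: matpow_Suc)
  have cPF: "P ** Fc = Fc ** P" unfolding Fc_def by (metis P1 matpow_commute)
  have cPS: "P ** Sc = Sc ** P" unfolding Sc_def
    by (simp add: mmult_sum_left mmult_sum_right) (metis P1 matpow_commute)
  have cSF: "Sc ** Fc = Fc ** Sc" unfolding Sc_def Fc_def
    by (simp add: mmult_sum_left mmult_sum_right matpow_commute)
  have eig: "is_eigenvalue Phi \<theta>" if "\<zeta> \<noteq> 0" "\<zeta> v* P = \<theta> *s \<zeta>" for \<zeta> \<theta>
    using left_to_right[OF that] unfolding is_eigenvalue_def P_def by blast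
  define \<eta> where "\<eta> = \<xi> v* Sc"
  have eta0: "\<eta> \<noteq> 0"
  proof
    assume "\<eta> = 0"
    define V where "V = {x :: complex^'k. x v* Sc = 0}"
    have sV: "vec.subspace V" unfolding vec.subspace_def V_def
      by (simp add: vector_matrix_left_distrib scalar_vector_matrix_assoc)
    have inv: "\<forall>x\<in>V. x v* P \<in> V"
      unfolding V_def by (simp add: vector_matrix_mul_assoc cPS) (metis vector_matrix_mul_assoc vector_matrix_mult_0)
    have "\<xi> \<in> V" using \<open>\<eta> = 0\<close> unfolding V_def \<eta>_def by simp
    then obtain \<zeta> \<theta> where z: "\<zeta> \<in> V" "\<zeta> \<noteq> 0" "\<zeta> v* P = \<theta> *s \<zeta>"
      using eig_subspace[OF sV inv] xi(1) by blast
    have "\<zeta> v* Sc = (\<Sum>c<l. \<theta> ^ c) *s \<zeta>"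
      unfolding Sc_def vmult_sum pow_eig[OF z(3)] by (simp add: vec.scale_sum_left)
    hence "(\<Sum>c<l. \<theta> ^ c) = 0" using z(1,2) unfolding V_def by simp
    thus False using c1 eig[OF z(2,3)] by blast
  qed
  define V where "V = {x :: complex^'k. x v* Fc = \<mu> *s x}"
  have sV: "vec.subspace V" unfolding vec.subspace_def V_def
    by (simp add: vector_matrix_left_distrib scalar_vector_matrix_assoc vector_sadd_rdistrib
        vector_smult_assoc mult.commute)
  have inv: "\<forall>x\<in>V. x v* P \<in> V"
    unfolding V_def by (simp add: vector_matrix_mul_assoc cPF)
      (metis vector_matrix_mul_assoc scalar_vector_matrix_assoc)
  have "\<xi> \<in> V" using xi(2) unfolding V_def by simp
  then obtain \<zeta> \<theta> where z: "\<zeta> \<in> V" "\<zeta> \<noteq> 0" "\<zeta> v* P = \<theta> *s \<zeta>"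
    using eig_subspace[OF sV inv] xi(1) by blast
  have "\<theta> ^ l *s \<zeta> = \<mu> *s \<zeta>" using z(1) pow_eig[OF z(3), of l] unfolding V_def Fc_def by simp
  hence mu: "\<mu> = \<theta> ^ l" using z(2)
    by (metis vec.scale_right_imp_eq)
  have "\<eta> v* Fc = \<mu> *s \<eta>"
    unfolding \<eta>_def by (simp add: vector_matrix_mul_assoc cSF)
      (metis vector_matrix_mul_assoc scalar_vector_matrix_assoc xi(2))
  hence "\<eta> v* cmat Psi \<noteq> 0" using c2 eig[OF z(2,3)] eta0 eF mu by auto
  moreover have "\<eta> v* cmat Psi = 0" using xi0 unfolding \<eta>_def Pc_def by (simp add: vector_matrix_mul_assoc)
  ultimately show False by blast
qed


theorem corollary13:
  fixes A :: "real^'n^'n" and B :: "real^'p^'n" and C :: "real^'n^'m"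
    and H :: "real^'m^'n" and W :: "real^'N^'N" and Delta :: "real^'N^'N"
    and h :: real and l :: nat
  assumes l_pos: "l \<ge> 1"
    and h_pos: "h > 0"
    and W_diag: "\<forall>i. W $ i $ i = 0"
    and Delta_diag: "\<forall>i j. i \<noteq> j \<longrightarrow> Delta $ i $ j = 0"
    and Delta_01: "\<forall>i. Delta $ i $ i \<in> {0, 1}"
  defines "Bh \<equiv> integral {0..h} (\<lambda>\<tau>. mexp (\<tau> *\<^sub>R A)) ** B"
    and "Hh \<equiv> integral {0..h} (\<lambda>\<tau>. mexp (\<tau> *\<^sub>R A)) ** H ** C"
  defines "Phi \<equiv> kron (mat 1 :: real^'N^'N) (mexp (h *\<^sub>R A)) + kron W Hh"
    and "Psi \<equiv> kron Delta Bh"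
  defines "Phit \<equiv> matpow Phi l"
    and "Psit \<equiv> (\<Sum>c<l. matpow Phi c) ** Psi"
  assumes cond1: "\<forall>\<theta>. is_eigenvalue Phi \<theta> \<longrightarrow> (\<Sum>c<l. \<theta> ^ c) \<noteq> 0"
    and cond2: "\<forall>\<theta> (\<eta>::complex^('N \<times> 'n)). is_eigenvalue Phi \<theta> \<and> \<eta> \<noteq> 0
                  \<and> \<eta> v* cmat Phit = \<theta> ^ l *s \<eta> \<longrightarrow> \<eta> v* cmat (kron Delta Bh) \<noteq> 0"
  shows "controllable Phit Psit"
  proof -
  have "controllable (matpow Phi l) ((\<Sum>c<l. matpow Phi c) ** kron Delta Bh)"
    by (rule main_generic) (use cond1 cond2 in \<open>simp_all add: Phit_def\<close>)
  thus ?thesis by (simp add: Phit_def Psit_def Psi_def)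
qed


end
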